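(* Consider an $N$-player quadratic game with step sizes $\gamma_1,\ldots,\gamma_N>0$, associated block matrix $W$, and disturbed gradient-based learning dynamics as described in the context, in which player $i$'s gradient is corrupted by an arbitrary disturbance. Then a player $j\neq i$ is disturbance decoupled from player $i$ if and only if $$\sum_{p\in\mathcal{P}^k_{ij}}\ \prod_{l=0}^{k-1}W_{v_{l+1},v_l}=0\quad\text{for all integers } 0<k<n,$$ where for each path $p=(i,v_1,\ldots,v_{k-1},j)\in\mathcal{P}^k_{ij}$ we set $v_0=i$, $v_k=j$, and the product denotes the ordered matrix product $W_{v_k,v_{k-1}}W_{v_{k-1},v_{k-2}}\cdots W_{v_1,v_0}$ (the path weight).
   Context: There are $N$ players, indexed by $[N]=\{1,\ldots,N\}$; player $\ell$ has action $x_\ell\in\mathbb{R}^{n_\ell}$, $n=\sum_{\ell=1}^N n_\ell$, and $x=(x_1,\ldots,x_N)\in\mathbb{R}^n$ is the joint action. A quadratic game has costs $f_\ell(x)=\tfrac12 x_\ell^\top P_\ell x_\ell + x_\ell^\top\big(\sum_{m\neq \ell}P_{\ell m}x_m + r_\ell\big)$ with $P_\ell\in\mathbb{R}^{n_\ell\times n_\ell}$ symmetric, $P_{\ell m}\in\mathbb{R}^{n_\ell\times n_m}$, $r_\ell\in\mathbb{R}^{n_\ell}$. Each player $\ell$ has step size $\gamma_\ell>0$ and updates $x_\ell^{k+1}=x_\ell^k-\gamma_\ell\big(D_\ell f_\ell(x^k)+d_\ell^k\big)$, where $D_\ell f_\ell=\partial f_\ell/\partial x_\ell$ and $d_\ell^k\in\mathbb{R}^{n_\ell}$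 is an arbitrary additive disturbance. Let $W\in\mathbb{R}^{n\times n}$ be the block matrix with blocks $W_{\ell\ell}=I_{n_\ell}-\gamma_\ell P_\ell$ and $W_{\ell m}=-\gamma_\ell P_{\ell m}$ ($\ell\neq m$), $\Gamma=\mathrm{blkdiag}(\gamma_1 I_{n_1},\ldots,\gamma_N I_{n_N})$, $\bar r=(r_1,\ldots,r_N)$. Let $\mathcal{D}_i=\{d\in\mathbb{R}^n : d_m=0\ \forall m\neq i\}$. The uncorrupted and corrupted dynamics are $x^{k+1}=Wx^k-\Gamma\bar r$ and $y^{k+1}=Wy^k-\Gamma\bar r-\Gamma d^k$. Player $j\neq i$ is disturbance decoupled from player $i$ if for every initial $x^0$, with $y^0=x^0$, one has $y_j^k=x_j^k$ for all $k\ge0$ and all disturbance sequences with $d^k\in\mathcal{D}_i$. Game graph: the directed graph on node set $[N]$ with an edge $(m,\ell)$ (from $m$ to $\ell$) of weight $W_{\ell m}\in\mathbb{R}^{n_\ell\times n_m}$ whenever $W_{\ell m}\neq0$, and with a self-loop $(\ell,\ell)$ of weight $W_{\ell\ell}$ at every node. A path $(i,v_1,\ldots,v_{k-1},j)$ is a sequence of $k+1$ nodes in which each consecutive pair is an edge (self-loops allowed); $\mathcal{P}^k_{ij}$ is the set of all such paths starting at $i$ and ending at $j$ with $k+1$ nodes. *)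

theory Defs
  imports "Jordan_Normal_Form.Matrix"
begin

text \<open>Players are indexed 0,...,N-1. Player l has action dimension nd l.
  Game data: P l (n_l x n_l, symmetric), Pc l m (n_l x n_m, l differs from m),
  r l (vector of dimension n_l), step sizes g l > 0.\<close>

definition Wblk :: "(nat \<Rightarrow> nat) \<Rightarrow> (nat \<Rightarrow> real) \<Rightarrow> (nat \<Rightarrow> real mat)
    \<Rightarrow> (nat \<Rightarrow> nat \<Rightarrow> real mat) \<Rightarrow> nat \<Rightarrow> nat \<Rightarrow> real mat" where
  "Wblk nd g P Pc l m =
     (if l = m then 1\<^sub>m (nd l) - g l \<cdot>\<^sub>m P l else (- g l) \<cdot>\<^sub>m Pc l m)"

text \<open>Block form of W x - Gamma rbar - Gamma d (player-wise).\<close>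
fun traj :: "nat \<Rightarrow> (nat \<Rightarrow> nat) \<Rightarrow> (nat \<Rightarrow> real) \<Rightarrow> (nat \<Rightarrow> nat \<Rightarrow> real mat)
    \<Rightarrow> (nat \<Rightarrow> real vec) \<Rightarrow> (nat \<Rightarrow> real vec) \<Rightarrow> (nat \<Rightarrow> nat \<Rightarrow> real vec)
    \<Rightarrow> nat \<Rightarrow> nat \<Rightarrow> real vec" where
  "traj N nd g W r x0 d 0 = x0"
| "traj N nd g W r x0 d (Suc k) =
     (\<lambda>l. vec (nd l) (\<lambda>a.
        (\<Sum>m<N. \<Sum>b<nd m. W l m $$ (a, b) * (traj N nd g W r x0 d k m) $ b)
        - g l * (r l $ a) - g l * (d k l $ a)))"

definition dist_decoupled :: "nat \<Rightarrow> (nat \<Rightarrow> nat) \<Rightarrow> (nat \<Rightarrow> real) \<Rightarrow> (nat \<Rightarrow> nat \<Rightarrow> real mat)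
    \<Rightarrow> (nat \<Rightarrow> real vec) \<Rightarrow> nat \<Rightarrow> nat \<Rightarrow> bool" where
  "dist_decoupled N nd g W r i j \<longleftrightarrow>
     (\<forall>x0 d. (\<forall>l<N. x0 l \<in> carrier_vec (nd l))
        \<longrightarrow> (\<forall>k l. l < N \<longrightarrow> d k l \<in> carrier_vec (nd l))
        \<longrightarrow> (\<forall>k m. m < N \<longrightarrow> m \<noteq> i \<longrightarrow> d k m = 0\<^sub>v (nd m))
        \<longrightarrow> (\<forall>k. traj N nd g W r x0 d k j
                  = traj N nd g W r x0 (\<lambda>k l. 0\<^sub>v (nd l)) k j))"

definition gedge :: "(nat \<Rightarrow> nat) \<Rightarrow> (nat \<Rightarrow> nat \<Rightarrow> real mat) \<Rightarrow> nat \<Rightarrow> nat \<Rightarrow> bool" where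
  "gedge nd W m l \<longleftrightarrow> l = m \<or> W l m \<noteq> 0\<^sub>m (nd l) (nd m)"

definition paths :: "nat \<Rightarrow> (nat \<Rightarrow> nat) \<Rightarrow> (nat \<Rightarrow> nat \<Rightarrow> real mat) \<Rightarrow> nat \<Rightarrow> nat \<Rightarrow> nat
    \<Rightarrow> nat list set" where
  "paths N nd W k i j = {p. length p = Suc k \<and> set p \<subseteq> {..<N} \<and> p ! 0 = i \<and> p ! k = j
       \<and> (\<forall>t<k. gedge nd W (p ! t) (p ! Suc t))}"

fun pweight :: "(nat \<Rightarrow> nat) \<Rightarrow> (nat \<Rightarrow> nat \<Rightarrow> real mat) \<Rightarrow> nat list \<Rightarrow> real mat" where
  "pweight nd W [] = 1\<^sub>m 0"
| "pweight nd W [v] = 1\<^sub>m (nd v)"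
| "pweight nd W (v # w # rest) = pweight nd W (w # rest) * W w v"

definition path_sum :: "nat \<Rightarrow> (nat \<Rightarrow> nat) \<Rightarrow> (nat \<Rightarrow> nat \<Rightarrow> real mat) \<Rightarrow> nat \<Rightarrow> nat \<Rightarrow> nat
    \<Rightarrow> real mat" where
  "path_sum N nd W k i j =
     mat (nd j) (nd i) (\<lambda>(a, b). \<Sum>p\<in>paths N nd W k i j. pweight nd W p $$ (a, b))"

end

theory Submission
  imports Defs "HOL-Library.Function_Algebras"
begin


lemma fun_sum_apply_my: "(\<Sum>x\<in>S. f x) p = (\<Sum>x\<in>S. f x p)"
  by (induction S rule: infinite_finite_induct) auto

lemma krylov:
  fixes A :: "('a \<Rightarrow> real) \<Rightarrow> ('a \<Rightarrow> real)" and I :: "'a set"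
  assumes L: "\<And>c x y. A (\<lambda>p. c * x p + y p) = (\<lambda>p. c * A x p + A y p)"
    and fin: "finite I" and supp: "\<And>x p. p \<notin> I \<Longrightarrow> A x p = 0"
    and s0: "\<And>p. p \<notin> I \<Longrightarrow> s p = 0"
    and z: "\<And>t. t < card I \<Longrightarrow> (A^^t) s q = 0"
  shows "(A^^t) s q = 0"
proof -
  interpret V: vector_space "\<lambda>c (f::'a\<Rightarrow>real) p. c * f p"
    by unfold_locales (auto simp: algebra_simps fun_eq_iff)
  define K where "K m = (\<lambda>t. (A^^t) s) ` {..<m}" for m
  have A0: "A 0 = 0"
  proof -
    have "A (\<lambda>p. (-1) * (0::'a\<Rightarrow>real) p + 0 p) = (\<lambda>p. (-1) * A 0 p + A 0 p)" by (rule L)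
    then show ?thesis by (simp add: fun_eq_iff zero_fun_def)
  qed
  have AL: "A ((\<lambda>p. c * x p) + y) = (\<lambda>p. c * A x p) + A y" for c x y
    using L[of c x y] by (simp add: plus_fun_def)
  have supp_t: "(A^^t) s p = 0" if "p \<notin> I" for t p
    using that by (cases t) (auto simp: s0 supp)
  define B where "B = (\<lambda>q p. if p = q then 1 else (0::real)) ` I"
  have inspan: "x \<in> V.span B" if x: "\<And>p. p \<notin> I \<Longrightarrow> x p = 0" for x
  proof -
    have "x = (\<Sum>q\<in>I. (\<lambda>p. x q * (if p = q then 1 else 0)))"
      using x fin by (auto simp: fun_eq_iff fun_sum_apply_my if_distrib cong: if_cong)
    also have "\<dots> \<in> V.span B"
      by (intro V.span_sum V.span_scale V.span_base) (auto simp: B_def)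
    finally show ?thesis .
  qed
  show ?thesis
  proof (cases "\<exists>m \<le> card I. (A^^m) s \<in> V.span (K m)")
    case False
    have ind: "V.independent (K m) \<and> card (K m) = m" if "m \<le> Suc (card I)" for m
      using that
    proof (induction m)
      case 0 then show ?case by (simp add: K_def V.independent_empty)
    next
      case (Suc m)
      have KS: "K (Suc m) = insert ((A^^m) s) (K m)" by (simp add: K_def lessThan_Suc)
      have ns: "(A^^m) s \<notin> V.span (K m)" using False Suc.prems by auto
      hence "(A^^m) s \<notin> K m" using V.span_superset by blast
      moreover have "finite (K m)" by (simp add: K_def)
      ultimately show ?case using Suc ns KS by (simp add: V.independent_insert)
    qed
    have "K (Suc (card I)) \<subseteq> V.span B"
      by (auto simp: K_def intro!: inspan supp_t)
    moreover have "finite B" using fin by (simp add: B_def)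
    ultimately have "card (K (Suc (card I))) \<le> card B"
      using V.independent_span_bound ind[of "Suc (card I)"] by blast
    moreover have "card B \<le> card I" unfolding B_def by (rule card_image_le[OF fin])
    ultimately show ?thesis using ind[of "Suc (card I)"] by simp
  next
    case True
    then obtain m where m: "m \<le> card I" "(A^^m) s \<in> V.span (K m)" by blast
    have cl: "A x \<in> V.span (K m)" if "x \<in> V.span (K m)" for x
      using that
    proof (induction rule: V.span_induct_alt)
      case base then show ?case using A0 V.span_zero by (simp add: zero_fun_def)
    next
      case (step c x y)
      then obtain t where t: "t < m" "x = (A^^t) s" by (auto simp: K_def)
      have "A x \<in> V.span (K m)"
      proof (cases "Suc t < m")
        case True then have "A x = (A^^(Suc t)) s" using t by simp
        then show ?thesis using True by (intro V.span_base) (auto simp: K_def simp del: funpow.simps)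
      next
        case False then have "Suc t = m" using t by simp
        then show ?thesis using t m by (metis funpow.simps(2) o_apply)
      qed
      moreover have "A ((\<lambda>p. c * x p) + y) = (\<lambda>p. c * A x p) + A y" by (rule AL)
      ultimately show ?case using step V.span_add V.span_scale by metis
    qed
    have all: "(A^^t) s \<in> V.span (K m)" for t
    proof (induction t)
      case 0
      show ?case
      proof (cases m)
        case 0 then show ?thesis using m by simp
      next
        case (Suc m') then have "(A^^0) s \<in> K m" unfolding K_def by (intro image_eqI[of _ _ 0]) auto
        then show ?thesis by (rule V.span_base)
      qed
    next
      case (Suc t) then show ?case using cl by simp
    qed
    have van: "x q = 0" if "x \<in> V.span (K m)" for x
      using that
    proof (induction rule: V.span_induct_alt)
      case base then show ?case by simp
    next
      case (step c x y)
      then obtain t where t: "t < m" "x = (A^^t) s" by (auto simp: K_def)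
      then show ?case using step z[of t] m by simp
    qed
    show ?thesis using van[OF all] .
  qed
qed

definition Aop :: "nat \<Rightarrow> (nat \<Rightarrow> nat) \<Rightarrow> (nat \<Rightarrow> nat \<Rightarrow> real mat) \<Rightarrow> (nat \<times> nat \<Rightarrow> real) \<Rightarrow> (nat \<times> nat \<Rightarrow> real)" where
  "Aop N nd W s = (\<lambda>p. if fst p < N \<and> snd p < nd (fst p)
      then (\<Sum>m<N. \<Sum>b<nd m. W (fst p) m $$ (snd p, b) * s (m, b)) else 0)"

definition dl :: "nat \<times> nat \<Rightarrow> nat \<times> nat \<Rightarrow> real" where
  "dl q = (\<lambda>p. if p = q then 1 else 0)"

definition Iset :: "nat \<Rightarrow> (nat \<Rightarrow> nat) \<Rightarrow> (nat \<times> nat) set" where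
  "Iset N nd = Sigma {..<N} (\<lambda>l. {..<nd l})"

lemma finite_Iset: "finite (Iset N nd)"
  by (simp add: Iset_def)

definition isL :: "(('a \<Rightarrow> real) \<Rightarrow> ('a \<Rightarrow> real)) \<Rightarrow> bool" where
  "isL A \<longleftrightarrow> (\<forall>c x y. A (\<lambda>p. c * x p + y p) = (\<lambda>p. c * A x p + A y p))"

lemma isLD: "isL A \<Longrightarrow> A (\<lambda>p. c * x p + y p) = (\<lambda>p. c * A x p + A y p)"
  unfolding isL_def by blast

lemma Aop_L: "isL (Aop N nd W)"
  unfolding isL_def
  by (auto simp: Aop_def fun_eq_iff sum.distrib sum_distrib_left algebra_simps)

lemma pow_L: "isL A \<Longrightarrow> isL (A^^t)"
  by (induction t) (auto simp: isL_def)

lemma L_zero: "isL A \<Longrightarrow> A (\<lambda>p. 0) = (\<lambda>p. 0)"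
  unfolding isL_def by (erule allE[of _ "-1"], erule allE[of _ "\<lambda>p. 0"], erule allE[of _ "\<lambda>p. 0"]) simp

lemma L_diff: "isL A \<Longrightarrow> A (\<lambda>p. x p - y p) = (\<lambda>p. A x p - A y p)"
  unfolding isL_def by (erule allE[of _ "-1"], erule allE[of _ y], erule allE[of _ x]) simp

lemma L_sum: assumes "isL A"
  shows "A (\<lambda>p. \<Sum>x\<in>S. c x * f x p) = (\<lambda>p. \<Sum>x\<in>S. c x * A (f x) p)"
proof (induction S rule: infinite_finite_induct)
  case (infinite S) then show ?case using L_zero[OF assms] by simp
next
  case empty then show ?case using L_zero[OF assms] by simp
next
  case (insert x F)
  have "A (\<lambda>p. \<Sum>x\<in>insert x F. c x * f x p) = A (\<lambda>p. c x * f x p + (\<Sum>x\<in>F. c x * f x p))"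
    using insert by simp
  also have "\<dots> = (\<lambda>p. c x * A (f x) p + A (\<lambda>p. \<Sum>x\<in>F. c x * f x p) p)"
    by (rule isLD[OF assms])
  finally show ?case using insert by simp
qed

lemma pweight_dim:
  "p \<noteq> [] \<Longrightarrow> set p \<subseteq> {..<N} \<Longrightarrow> (\<And>l m. l < N \<Longrightarrow> m < N \<Longrightarrow> W l m \<in> carrier_mat (nd l) (nd m))
   \<Longrightarrow> pweight nd W p \<in> carrier_mat (nd (last p)) (nd (hd p))"
proof (induction nd W p rule: pweight.induct)
  case (3 nd W v w rest)
  then show ?case by (auto intro!: mult_carrier_mat)
qed auto

lemma mult_entry:
  assumes "A \<in> carrier_mat n m" "B \<in> carrier_mat m q" "a < n" "b < q"
  shows "(A * B) $$ (a, b) = (\<Sum>c<m. A $$ (a, c) * B $$ (c, b))"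
  using assms by (simp add: scalar_prod_def atLeast0LessThan)

lemma paths_finite: "finite (paths N nd W k i j)"
proof -
  have "paths N nd W k i j \<subseteq> {p. set p \<subseteq> {..<N} \<and> length p = Suc k}"
    by (auto simp: paths_def)
  moreover have "finite {p. set p \<subseteq> {..<N} \<and> length p = Suc k}"
    by (rule finite_lists_length_eq) simp
  ultimately show ?thesis by (rule finite_subset)
qed

lemma paths_0: "paths N nd W 0 i j = (if i = j \<and> i < N then {[i]} else {})"
  by (auto simp: paths_def length_Suc_conv)


lemma paths_Suc:
  assumes "i < N"
  shows "paths N nd W (Suc k) i j = (\<Union>v\<in>{v. v < N \<and> gedge nd W i v}. (Cons i) ` paths N nd W k v j)"
proof (intro equalityI subsetI)
  fix p assume p: "p \<in> paths N nd W (Suc k) i j"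
  then obtain x q where pq: "p = x # q" "length q = Suc k" by (auto simp: paths_def length_Suc_conv)
  have x: "x = i" using p pq by (simp add: paths_def)
  have e: "\<forall>t<Suc k. gedge nd W (p ! t) (p ! Suc t)" using p by (simp add: paths_def)
  have "gedge nd W i (q ! 0)" using e[rule_format, of 0] pq x by simp
  moreover have "q ! 0 < N"
  proof -
    have "q ! 0 \<in> set q" using pq by simp
    moreover have "set q \<subseteq> {..<N}" using p pq by (simp add: paths_def)
    ultimately show ?thesis by blast
  qed
  moreover have "q \<in> paths N nd W k (q ! 0) j"
  proof -
    have "\<forall>t<k. gedge nd W (q ! t) (q ! Suc t)"
    proof (intro allI impI)
      fix t assume "t < k"
      then show "gedge nd W (q ! t) (q ! Suc t)" using e[rule_format, of "Suc t"] pq by simp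
    qed
    then show ?thesis using p pq by (auto simp: paths_def)
  qed
  ultimately show "p \<in> (\<Union>v\<in>{v. v < N \<and> gedge nd W i v}. (Cons i) ` paths N nd W k v j)"
    using pq x by blast
next
  fix p assume "p \<in> (\<Union>v\<in>{v. v < N \<and> gedge nd W i v}. (Cons i) ` paths N nd W k v j)"
  then obtain v q where v: "v < N" "gedge nd W i v" and q: "q \<in> paths N nd W k v j" and pq: "p = i # q"
    by blast
  have e: "\<forall>t<k. gedge nd W (q ! t) (q ! Suc t)" and q0: "q ! 0 = v"
    using q by (auto simp: paths_def)
  have "\<forall>t<Suc k. gedge nd W (p ! t) (p ! Suc t)"
  proof (intro allI impI)
    fix t assume "t < Suc k"
    then show "gedge nd W (p ! t) (p ! Suc t)"
      using e v q0 pq by (cases t) auto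
  qed
  then show "p \<in> paths N nd W (Suc k) i j" using q pq assms by (auto simp: paths_def)
qed

lemma sum_paths_Suc:
  assumes "i < N"
  shows "(\<Sum>p\<in>paths N nd W (Suc k) i j. f p)
    = (\<Sum>v\<in>{v. v < N \<and> gedge nd W i v}. \<Sum>q\<in>paths N nd W k v j. f (i # q))"
proof -
  have "(\<Sum>p\<in>paths N nd W (Suc k) i j. f p)
     = (\<Sum>v\<in>{v. v < N \<and> gedge nd W i v}. \<Sum>p\<in>(Cons i) ` paths N nd W k v j. f p)"
    unfolding paths_Suc[OF assms]
  proof (rule sum.UNION_disjoint)
    show "finite {v. v < N \<and> gedge nd W i v}" by simp
    show "\<forall>v\<in>{v. v < N \<and> gedge nd W i v}. finite ((Cons i) ` paths N nd W k v j)"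
      by (simp add: paths_finite)
    show "\<forall>v\<in>{v. v < N \<and> gedge nd W i v}. \<forall>w\<in>{v. v < N \<and> gedge nd W i v}. v \<noteq> w \<longrightarrow>
       (Cons i) ` paths N nd W k v j \<inter> (Cons i) ` paths N nd W k w j = {}"
      by (auto simp: paths_def)
  qed
  also have "\<dots> = (\<Sum>v\<in>{v. v < N \<and> gedge nd W i v}. \<Sum>q\<in>paths N nd W k v j. f (i # q))"
    by (rule sum.cong[OF refl]) (simp add: sum.reindex inj_on_def)
  finally show ?thesis .
qed

lemma Aop_dl:
  assumes "i < N" "b < nd i"
  shows "Aop N nd W (dl (i, b)) = (\<lambda>p. \<Sum>vc\<in>Iset N nd. W (fst vc) i $$ (snd vc, b) * dl vc p)"
proof
  fix p :: "nat \<times> nat"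
  obtain l a where p: "p = (l, a)" by (cases p)
  have "(\<Sum>vc\<in>Iset N nd. W (fst vc) i $$ (snd vc, b) * dl vc p)
      = (if p \<in> Iset N nd then W l i $$ (a, b) else 0)"
    by (simp add: dl_def p if_distrib sum.delta' finite_Iset cong: if_cong)
  moreover have "Aop N nd W (dl (i, b)) p = (if p \<in> Iset N nd then W l i $$ (a, b) else 0)"
  proof -
    have "(\<Sum>m<N. \<Sum>b'<nd m. W l m $$ (a, b') * dl (i, b) (m, b'))
       = (\<Sum>m<N. if m = i then W l m $$ (a, b) else 0)"
      by (intro sum.cong refl) (use assms in \<open>auto simp: dl_def if_distrib cong: if_cong\<close>)
    also have "\<dots> = W l i $$ (a, b)" using assms by simp
    finally show ?thesis by (simp add: Aop_def Iset_def p)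
  qed
  ultimately show "Aop N nd W (dl (i, b)) p = (\<Sum>vc\<in>Iset N nd. W (fst vc) i $$ (snd vc, b) * dl vc p)"
    by simp
qed


lemma path_eq:
  assumes Wd: "\<And>l m. l < N \<Longrightarrow> m < N \<Longrightarrow> W l m \<in> carrier_mat (nd l) (nd m)"
  shows "i < N \<Longrightarrow> j < N \<Longrightarrow> a < nd j \<Longrightarrow> b < nd i \<Longrightarrow>
    (\<Sum>p\<in>paths N nd W k i j. pweight nd W p $$ (a, b)) = (Aop N nd W ^^ k) (dl (i, b)) (j, a)"
proof (induction k arbitrary: i b)
  case 0
  then show ?case by (auto simp: paths_0 dl_def)
next
  case (Suc k)
  let ?A = "Aop N nd W"
  let ?V = "{v. v < N \<and> gedge nd W i v}"
  have pw: "pweight nd W (i # q) $$ (a, b) = (\<Sum>c<nd v. pweight nd W q $$ (a, c) * W v i $$ (c, b))"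
    if v: "v \<in> ?V" and q: "q \<in> paths N nd W k v j" for v q
  proof -
    from q have lq: "length q = Suc k" and q0: "q ! 0 = v" and qk: "q ! k = j" and sq: "set q \<subseteq> {..<N}"
      by (auto simp: paths_def)
    then obtain rest where qr: "q = v # rest" by (cases q) auto
    have lst: "last q = j" using lq qk by (subst last_conv_nth) auto
    have "pweight nd W q \<in> carrier_mat (nd j) (nd v)"
      using pweight_dim[of q N W nd] sq Wd lst qr by auto
    moreover have "W v i \<in> carrier_mat (nd v) (nd i)" using Wd v Suc.prems by auto
    moreover have "pweight nd W (i # q) = pweight nd W q * W v i" using qr by simp
    ultimately show ?thesis using Suc.prems mult_entry[of "pweight nd W q" "nd j" "nd v" "W v i" "nd i" a b] by simp
  qed
  have "(\<Sum>p\<in>paths N nd W (Suc k) i j. pweight nd W p $$ (a, b))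
      = (\<Sum>v\<in>?V. \<Sum>q\<in>paths N nd W k v j. pweight nd W (i # q) $$ (a, b))"
    by (rule sum_paths_Suc[OF Suc.prems(1)])
  also have "\<dots> = (\<Sum>v\<in>?V. \<Sum>q\<in>paths N nd W k v j. \<Sum>c<nd v. pweight nd W q $$ (a, c) * W v i $$ (c, b))"
    using pw by (intro sum.cong refl) auto
  also have "\<dots> = (\<Sum>v\<in>?V. \<Sum>c<nd v. (\<Sum>q\<in>paths N nd W k v j. pweight nd W q $$ (a, c)) * W v i $$ (c, b))"
    by (intro sum.cong refl) (simp add: sum.swap[of _ "paths N nd W k _ j"] sum_distrib_right)
  also have "\<dots> = (\<Sum>v\<in>?V. \<Sum>c<nd v. (?A ^^ k) (dl (v, c)) (j, a) * W v i $$ (c, b))"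
    using Suc.IH Suc.prems by (intro sum.cong refl) auto
  also have "\<dots> = (\<Sum>v<N. \<Sum>c<nd v. (?A ^^ k) (dl (v, c)) (j, a) * W v i $$ (c, b))"
  proof (rule sum.mono_neutral_left)
    show "\<forall>v\<in>{..<N} - ?V. (\<Sum>c<nd v. (?A ^^ k) (dl (v, c)) (j, a) * W v i $$ (c, b)) = 0"
      using Suc.prems by (auto simp: gedge_def)
  qed auto
  also have "\<dots> = (\<Sum>vc\<in>Iset N nd. W (fst vc) i $$ (snd vc, b) * (?A ^^ k) (dl vc) (j, a))"
    by (simp add: Iset_def sum.Sigma split_def mult.commute)
  also have "\<dots> = (?A ^^ k) (\<lambda>p. \<Sum>vc\<in>Iset N nd. W (fst vc) i $$ (snd vc, b) * dl vc p) (j, a)"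
    using L_sum[OF pow_L[OF Aop_L], of k N nd W "\<lambda>vc. W (fst vc) i $$ (snd vc, b)" dl "Iset N nd"]
    by simp
  also have "\<dots> = (?A ^^ Suc k) (dl (i, b)) (j, a)"
  proof -
    have eqA: "?A (dl (i, b)) = (\<lambda>p. \<Sum>vc\<in>Iset N nd. W (fst vc) i $$ (snd vc, b) * dl vc p)"
      using Aop_dl[of i N b nd W] Suc.prems by blast
    show ?thesis by (simp only: funpow_Suc_right o_apply eqA)
  qed
  finally show ?case .
qed


definition Fv :: "nat \<Rightarrow> (nat \<Rightarrow> nat) \<Rightarrow> (nat \<Rightarrow> real vec) \<Rightarrow> nat \<times> nat \<Rightarrow> real" where
  "Fv N nd x = (\<lambda>p. if fst p < N \<and> snd p < nd (fst p) then x (fst p) $ snd p else 0)"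

lemma traj_step:
  "Fv N nd (traj N nd g W r x0 d (Suc k)) = (\<lambda>p. Aop N nd W (Fv N nd (traj N nd g W r x0 d k)) p
     - (if fst p < N \<and> snd p < nd (fst p) then g (fst p) * r (fst p) $ snd p + g (fst p) * d k (fst p) $ snd p else 0))"
proof
  fix p :: "nat \<times> nat"
  obtain l a where p: "p = (l, a)" by (cases p)
  have "(\<Sum>m<N. \<Sum>b<nd m. W l m $$ (a, b) * Fv N nd (traj N nd g W r x0 d k) (m, b))
      = (\<Sum>m<N. \<Sum>b<nd m. W l m $$ (a, b) * traj N nd g W r x0 d k m $ b)"
    by (intro sum.cong refl) (auto simp: Fv_def)
  then show "Fv N nd (traj N nd g W r x0 d (Suc k)) p = (\<lambda>p. Aop N nd W (Fv N nd (traj N nd g W r x0 d k)) p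
     - (if fst p < N \<and> snd p < nd (fst p) then g (fst p) * r (fst p) $ snd p + g (fst p) * d k (fst p) $ snd p else 0)) p"
    by (simp add: p Fv_def Aop_def del: traj.simps(1))
qed

lemma E_step:
  "(\<lambda>p. Fv N nd (traj N nd g W r x0 d (Suc k)) p - Fv N nd (traj N nd g W r x0 (\<lambda>k l. 0\<^sub>v (nd l)) (Suc k)) p)
   = (\<lambda>p. Aop N nd W (\<lambda>p. Fv N nd (traj N nd g W r x0 d k) p - Fv N nd (traj N nd g W r x0 (\<lambda>k l. 0\<^sub>v (nd l)) k) p) p
        - (if fst p < N \<and> snd p < nd (fst p) then g (fst p) * d k (fst p) $ snd p else 0))"
  unfolding traj_step L_diff[OF Aop_L] by (auto simp: fun_eq_iff)



theorem theorem1: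
  fixes N :: nat and nd :: "nat \<Rightarrow> nat" and g :: "nat \<Rightarrow> real"
    and P :: "nat \<Rightarrow> real mat" and Pc :: "nat \<Rightarrow> nat \<Rightarrow> real mat" and r :: "nat \<Rightarrow> real vec"
    and i j :: nat
  assumes P_dim: "\<And>l. l < N \<Longrightarrow> P l \<in> carrier_mat (nd l) (nd l)"
    and P_sym: "\<And>l. l < N \<Longrightarrow> transpose_mat (P l) = P l"
    and Pc_dim: "\<And>l m. l < N \<Longrightarrow> m < N \<Longrightarrow> l \<noteq> m \<Longrightarrow> Pc l m \<in> carrier_mat (nd l) (nd m)"
    and r_dim: "\<And>l. l < N \<Longrightarrow> r l \<in> carrier_vec (nd l)"
    and g_pos: "\<And>l. l < N \<Longrightarrow> g l > 0"
    and ij: "i < N" "j < N" "j \<noteq> i"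
  shows "dist_decoupled N nd g (Wblk nd g P Pc) r i j \<longleftrightarrow>
    (\<forall>k::nat. 0 < k \<and> k < (\<Sum>l<N. nd l) \<longrightarrow>
        path_sum N nd (Wblk nd g P Pc) k i j = 0\<^sub>m (nd j) (nd i))"
  proof -
  define W where "W = Wblk nd g P Pc"
  let ?A = "Aop N nd W"
  let ?n = "\<Sum>l<N. nd l"
  let ?z = "\<lambda>(k::nat) l. 0\<^sub>v (nd l)"
  have Wd: "W l m \<in> carrier_mat (nd l) (nd m)" if "l < N" "m < N" for l m
    using that P_dim[of l] Pc_dim[of l m] by (auto simp: W_def Wblk_def intro!: minus_carrier_mat)
  have pe: "path_sum N nd W k i j $$ (a, b) = (?A ^^ k) (dl (i, b)) (j, a)"
    if "a < nd j" "b < nd i" for k a b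
    using path_eq[of N W nd i j a b k, OF Wd] that ij by (simp add: path_sum_def)
  define E where "E x0 d k = (\<lambda>p. Fv N nd (traj N nd g W r x0 d k) p - Fv N nd (traj N nd g W r x0 ?z k) p)"
    for x0 d k
  have EFv: "E x0 d k (j, a) = traj N nd g W r x0 d k j $ a - traj N nd g W r x0 ?z k j $ a"
    if "a < nd j" for x0 d k a
    using that ij by (simp add: E_def Fv_def)
  have ES: "E x0 d (Suc k) = (\<lambda>p. ?A (E x0 d k) p
        - (if fst p < N \<and> snd p < nd (fst p) then g (fst p) * d k (fst p) $ snd p else 0))" for x0 d k
    unfolding E_def by (rule E_step)
  have E0: "E x0 d 0 = (\<lambda>p. 0)" for x0 d by (simp add: E_def)
  have powL: "isL (?A ^^ t)" for t by (rule pow_L[OF Aop_L])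
  show ?thesis
  proof
    assume dd: "dist_decoupled N nd g (Wblk nd g P Pc) r i j"
    have key1: "(?A ^^ k) (dl (i, b)) (j, a) = 0" if b: "b < nd i" and a: "a < nd j" for b k a
    proof -
      define x0 where "x0 = (\<lambda>l. 0\<^sub>v (nd l) :: real vec)"
      define d where "d = (\<lambda>(t::nat) l. if t = 0 \<and> l = i then vec (nd i) (\<lambda>a. if a = b then - 1 / g i else 0)
          else 0\<^sub>v (nd l))"
      have eq: "traj N nd g W r x0 d k j = traj N nd g W r x0 ?z k j" for k
        using dd unfolding dist_decoupled_def W_def[symmetric]
        by (elim allE[of _ x0] allE[of _ d]) (auto simp: x0_def d_def)
      have gi: "g i > 0" using g_pos ij by auto
      have Ek: "E x0 d (Suc t) = (?A ^^ t) (dl (i, b))" for t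
      proof (induction t)
        case 0
        show ?case
        proof
          fix p :: "nat \<times> nat"
          show "E x0 d (Suc 0) p = (?A ^^ 0) (dl (i, b)) p"
            using L_zero[OF Aop_L] gi b ij
            by (cases p) (auto simp: ES E0 d_def dl_def)
        qed
      next
        case (Suc t)
        have "d (Suc t) l = 0\<^sub>v (nd l)" for l by (simp add: d_def)
        then show ?case unfolding ES[of x0 d "Suc t"] Suc by (auto simp: fun_eq_iff)
      qed
      have "E x0 d (Suc k) (j, a) = 0" using EFv[OF a, of x0 d "Suc k"] eq[of "Suc k"] by (simp del: traj.simps)
      then show ?thesis using Ek by simp
    qed
    show "\<forall>k. 0 < k \<and> k < ?n \<longrightarrow> path_sum N nd (Wblk nd g P Pc) k i j = 0\<^sub>m (nd j) (nd i)"
    proof (intro allI impI)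
      fix k assume "0 < k \<and> k < ?n"
      show "path_sum N nd (Wblk nd g P Pc) k i j = 0\<^sub>m (nd j) (nd i)"
        unfolding W_def[symmetric]
      proof (rule eq_matI)
        fix a b assume "a < dim_row (0\<^sub>m (nd j) (nd i))" "b < dim_col (0\<^sub>m (nd j) (nd i))"
        then show "path_sum N nd W k i j $$ (a, b) = 0\<^sub>m (nd j) (nd i) $$ (a, b)"
          using pe key1 by simp
      qed (auto simp: path_sum_def)
    qed
  next
    assume hp: "\<forall>k. 0 < k \<and> k < ?n \<longrightarrow> path_sum N nd (Wblk nd g P Pc) k i j = 0\<^sub>m (nd j) (nd i)"
    have cardI: "card (Iset N nd) = ?n" by (simp add: Iset_def)
    have key2: "(?A ^^ t) (dl (i, b)) (j, a) = 0" if b: "b < nd i" and a: "a < nd j" for b t a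
    proof (rule krylov[where I = "Iset N nd"])
      show "?A (\<lambda>p. c * x p + y p) = (\<lambda>p. c * ?A x p + ?A y p)" for c x y
        by (rule isLD[OF Aop_L])
      show "finite (Iset N nd)" by (rule finite_Iset)
      show "?A x p = 0" if "p \<notin> Iset N nd" for x p
        using that by (cases p) (auto simp: Aop_def Iset_def)
      show "dl (i, b) p = 0" if "p \<notin> Iset N nd" for p
        using that b ij by (auto simp: dl_def Iset_def)
      show "(?A ^^ t) (dl (i, b)) (j, a) = 0" if "t < card (Iset N nd)" for t
      proof (cases t)
        case 0 then show ?thesis using ij by (simp add: dl_def)
      next
        case (Suc t')
        then have "path_sum N nd W t i j = 0\<^sub>m (nd j) (nd i)"
          using hp that cardI unfolding W_def by auto
        then show ?thesis using pe[OF a b, of t] a b by simp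
      qed
    qed
    show "dist_decoupled N nd g (Wblk nd g P Pc) r i j"
      unfolding dist_decoupled_def W_def[symmetric]
    proof (intro allI impI)
      fix x0 :: "nat \<Rightarrow> real vec" and d :: "nat \<Rightarrow> nat \<Rightarrow> real vec" and k :: nat
      assume x0c: "\<forall>l<N. x0 l \<in> carrier_vec (nd l)"
        and dc: "\<forall>k l. l < N \<longrightarrow> d k l \<in> carrier_vec (nd l)"
        and d0: "\<forall>k m. m < N \<longrightarrow> m \<noteq> i \<longrightarrow> d k m = 0\<^sub>v (nd m)"
      define D where "D k = (\<lambda>p. if fst p < N \<and> snd p < nd (fst p) then g (fst p) * d k (fst p) $ snd p else 0)" for k
      have Dk: "D k = (\<lambda>p. \<Sum>b\<in>{..<nd i}. (g i * d k i $ b) * dl (i, b) p)" for k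
      proof
        fix p :: "nat \<times> nat"
        obtain l a where p: "p = (l, a)" by (cases p)
        show "D k p = (\<Sum>b\<in>{..<nd i}. (g i * d k i $ b) * dl (i, b) p)"
          using d0 ij by (cases "l = i") (auto simp: D_def dl_def p if_distrib cong: if_cong)
      qed
      have ESD: "E x0 d (Suc k) = (\<lambda>p. ?A (E x0 d k) p - D k p)" for k
        unfolding ES D_def by simp
      have inv: "(?A ^^ t) (E x0 d k) (j, a) = 0" if "a < nd j" for t a
        using that
      proof (induction k arbitrary: t a)
        case 0 then show ?case using L_zero[OF powL] by (simp add: E0)
      next
        case (Suc k)
        have "(?A ^^ t) (E x0 d (Suc k)) = (\<lambda>p. (?A ^^ t) (?A (E x0 d k)) p - (?A ^^ t) (D k) p)"
          unfolding ESD by (rule L_diff[OF powL])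
        moreover have "(?A ^^ t) (?A (E x0 d k)) = (?A ^^ Suc t) (E x0 d k)"
          by (simp only: funpow_Suc_right o_apply)
        moreover have "(?A ^^ t) (D k) (j, a) = 0"
          unfolding Dk L_sum[OF powL] using key2 Suc.prems by simp
        ultimately show ?case using Suc.IH[OF Suc.prems, of "Suc t"] by simp
      qed
      show "traj N nd g W r x0 d k j = traj N nd g W r x0 ?z k j"
      proof (cases k)
        case 0 then show ?thesis by simp
      next
        case (Suc k')
        show ?thesis
        proof (rule eq_vecI)
          show "dim_vec (traj N nd g W r x0 d k j) = dim_vec (traj N nd g W r x0 ?z k j)"
            using Suc by simp
          fix a assume "a < dim_vec (traj N nd g W r x0 ?z k j)"
          then have a: "a < nd j" using Suc by simp
          show "traj N nd g W r x0 d k j $ a = traj N nd g W r x0 ?z k j $ a"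
            using inv[OF a, of 0] EFv[OF a, of x0 d k] by simp
        qed
      qed
    qed
  qed
qed

end
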